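(* Let $G$ be a finite abelian group, $H\le G$, and let $m_I\ge0$ be integers for $I\le H$. Let $A=\coprod_{I\le H}\coprod_{m_I}G/I$ (the disjoint union of $m_I$ copies of $G/I$ for each $I\le H$) and let $\mathrm{Pr}:A\to G/H$ be the $G$-map given on each copy of $G/I$ by the natural projection $gI\mapsto gH$. Let $S$ be the set of maps $s:G/H\to A$ with $\mathrm{Pr}\circ s=\mathrm{id}_{G/H}$, with $G$-action $({}^g s)(x)=g\,s(g^{-1}x)$, and for $s\in S$ let $G_s$ be its stabilizer. Then for every $K\le G$, $$\#\{s\in S\mid K\le G_s\}=\Big(\sum_{K\cap H\le I\le H}m_I\,|H:I|\Big)^{|G:KH|}.$$ Consequently, the numbers $c(K)=\#\{s\in S\mid G_s=K\}$ satisfy $c(K)=\big(\sum_{K\cap H\le I\le H}m_I|H:I|\big)^{|G:KH|}-\sum_{K<L\le G}c(L)$.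
   Context: $G$-sets are finite sets with a left action of the finite group $G$; $G/I$ denotes the set of left cosets with the left multiplication action. $|H:I|$ is the index, and $KH$ the subgroup generated by $K$ and $H$ (a product since $G$ is abelian). *)

theory Defs
  imports "HOL-Algebra.Algebra"
begin

text \<open>The G-set A: disjoint union over subgroups I of H of m I copies of G/I.
  An element is a triple (I, j, c): copy number j < m I of the left coset c of I.\<close>
definition Aset :: "('a, 'b) monoid_scheme \<Rightarrow> 'a set \<Rightarrow> ('a set \<Rightarrow> nat) \<Rightarrow> ('a set \<times> nat \<times> 'a set) set" where
  "Aset G H m = {(I, j, c). subgroup I G \<and> I \<subseteq> H \<and> j < m I \<and> c \<in> lcosets\<^bsub>G\<^esub> I}"

definition Aact :: "('a, 'b) monoid_scheme \<Rightarrow> 'a \<Rightarrow> ('a set \<times> nat \<times> 'a set) \<Rightarrow> ('a set \<times> nat \<times> 'a set)" where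
  "Aact G g a = (case a of (I, j, c) \<Rightarrow> (I, j, g <#\<^bsub>G\<^esub> c))"

text \<open>The projection Pr : A \<rightarrow> G/H, gI \<mapsto> gH (note gI \<cdot> H = gH as I \<subseteq> H).\<close>
definition Pr :: "('a, 'b) monoid_scheme \<Rightarrow> 'a set \<Rightarrow> ('a set \<times> nat \<times> 'a set) \<Rightarrow> 'a set" where
  "Pr G H a = (case a of (I, j, c) \<Rightarrow> c <#>\<^bsub>G\<^esub> H)"

definition Sset :: "('a, 'b) monoid_scheme \<Rightarrow> 'a set \<Rightarrow> ('a set \<Rightarrow> nat) \<Rightarrow> ('a set \<Rightarrow> ('a set \<times> nat \<times> 'a set)) set" where
  "Sset G H m = {s. s \<in> extensional (lcosets\<^bsub>G\<^esub> H) \<and>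
      (\<forall>x \<in> lcosets\<^bsub>G\<^esub> H. s x \<in> Aset G H m \<and> Pr G H (s x) = x)}"

definition Sact :: "('a, 'b) monoid_scheme \<Rightarrow> 'a set \<Rightarrow> 'a \<Rightarrow> ('a set \<Rightarrow> ('a set \<times> nat \<times> 'a set)) \<Rightarrow> ('a set \<Rightarrow> ('a set \<times> nat \<times> 'a set))" where
  "Sact G H g s = (\<lambda>x \<in> lcosets\<^bsub>G\<^esub> H. Aact G g (s (inv\<^bsub>G\<^esub> g <#\<^bsub>G\<^esub> x)))"

definition stab :: "('a, 'b) monoid_scheme \<Rightarrow> 'a set \<Rightarrow> ('a set \<Rightarrow> ('a set \<times> nat \<times> 'a set)) \<Rightarrow> 'a set" where
  "stab G H s = {g \<in> carrier G. Sact G H g s = s}"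

definition idx :: "'a set \<Rightarrow> 'a set \<Rightarrow> nat" where
  "idx H I = card H div card I"

definition cnt :: "('a, 'b) monoid_scheme \<Rightarrow> 'a set \<Rightarrow> ('a set \<Rightarrow> nat) \<Rightarrow> 'a set \<Rightarrow> nat" where
  "cnt G H m K = card {s \<in> Sset G H m. stab G H s = K}"

end

theory Submission
  imports Defs
begin

no_notation (ASCII) subset_mset (infix \<open><#\<close> 50)



context comm_group
begin

lemma lcos_eq_iff:
  assumes "subgroup I G" "g \<in> carrier G" "g' \<in> carrier G"
  shows "(g <# I = g' <# I) = (inv g \<otimes> g' \<in> I)"
proof
  assume "g <# I = g' <# I"
  then have "g' \<in> g <# I" using lcos_self[OF assms(3,1)] by simp
  then show "inv g \<otimes> g' \<in> I" using subgroup.lcos_module_imp[OF assms(1) is_group assms(2)] by blast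
next
  assume "inv g \<otimes> g' \<in> I"
  then have "g' \<in> g <# I" using subgroup.lcos_module_rev[OF assms(1) is_group assms(2,3)] by blast
  then show "g <# I = g' <# I" using l_repr_independence[OF _ assms(2,1)] by blast
qed

lemma lcos_fix_iff:
  assumes "subgroup I G" "g \<in> carrier G" "k \<in> carrier G"
  shows "(k <# (g <# I) = g <# I) = (k \<in> I)"
proof -
  have Ic: "I \<subseteq> carrier G" using assms(1) subgroup.subset by blast
  have "k <# (g <# I) = (k \<otimes> g) <# I" using lcos_m_assoc[OF Ic assms(3,2)] .
  moreover have "inv (k \<otimes> g) \<otimes> g = inv k"
  proof -
    have "inv (k \<otimes> g) = inv k \<otimes> inv g" using assms by (simp add: inv_mult)
    then show ?thesis using assms by (simp add: m_assoc)
  qed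
  moreover have "(inv k \<in> I) = (k \<in> I)"
  proof
    assume "inv k \<in> I" then have "inv (inv k) \<in> I" using subgroup.m_inv_closed[OF assms(1)] by blast
    then show "k \<in> I" using assms(3) by simp
  next
    assume "k \<in> I" then show "inv k \<in> I" using subgroup.m_inv_closed[OF assms(1)] by blast
  qed
  ultimately show ?thesis using lcos_eq_iff[OF assms(1), of "k \<otimes> g" g] assms by simp
qed

lemma set_mult_sub_id:
  assumes "subgroup I G" "subgroup H G" "I \<subseteq> H"
  shows "I <#> H = H"
proof
  show "I <#> H \<subseteq> H" unfolding set_mult_def using assms subgroup.m_closed[OF assms(2)] by blast
  show "H \<subseteq> I <#> H"
  proof
    fix h assume "h \<in> H"
    then have "h = \<one> \<otimes> h" using assms(2) subgroup.mem_carrier by fastforce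
    then show "h \<in> I <#> H" unfolding set_mult_def using \<open>h \<in> H\<close> subgroup.one_closed[OF assms(1)] by blast
  qed
qed

lemma Pr_coset:
  assumes "subgroup I G" "subgroup H G" "I \<subseteq> H" "g \<in> carrier G"
  shows "(g <# I) <#> H = g <# H"
proof -
  have "(g <# I) <#> H = g <# (I <#> H)"
    using setmult_lcos_assoc[of I H g] assms subgroup.subset by blast
  then show ?thesis using set_mult_sub_id[OF assms(1-3)] by simp
qed

lemma Aset_E:
  assumes "a \<in> Aset G H m"
  obtains I j g where "a = (I, j, g <# I)" "subgroup I G" "I \<subseteq> H" "j < m I" "g \<in> carrier G"
  using assms unfolding Aset_def LCOSETS_def by blast

lemma Aset_I:
  assumes "subgroup I G" "I \<subseteq> H" "j < m I" "g \<in> carrier G"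
  shows "(I, j, g <# I) \<in> Aset G H m"
  using assms unfolding Aset_def LCOSETS_def by blast

lemma Aact_Aact:
  assumes "a \<in> Aset G H m" "g \<in> carrier G" "h \<in> carrier G"
  shows "Aact G g (Aact G h a) = Aact G (g \<otimes> h) a"
  using assms(1) proof (cases rule: Aset_E)
  case (1 I j c)
  have "c <# I \<subseteq> carrier G" using 1 l_coset_subset_G subgroup.subset by blast
  then have "g <# (h <# (c <# I)) = (g \<otimes> h) <# (c <# I)" using lcos_m_assoc assms by blast
  then show ?thesis using 1 by (simp add: Aact_def)
qed

lemma Aact_one:
  assumes "a \<in> Aset G H m"
  shows "Aact G \<one> a = a"
  using assms(1) proof (cases rule: Aset_E)
  case (1 I j c)
  then show ?thesis by (simp add: Aact_def lcos_mult_one l_coset_subset_G subgroup.subset)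
qed

lemma Aact_Aset:
  assumes "a \<in> Aset G H m" "g \<in> carrier G"
  shows "Aact G g a \<in> Aset G H m"
  using assms(1) proof (cases rule: Aset_E)
  case (1 I j c)
  then show ?thesis using assms Aset_I[where I=I and j=j and g="g \<otimes> c"]
    by (simp add: Aact_def lcos_m_assoc subgroup.subset)
qed

lemma Pr_Aact:
  assumes "a \<in> Aset G H m" "g \<in> carrier G" "subgroup H G"
  shows "Pr G H (Aact G g a) = g <# Pr G H a"
  using assms(1) proof (cases rule: Aset_E)
  case (1 I j c)
  then show ?thesis using assms Pr_coset
    by (simp add: Aact_def Pr_def lcos_m_assoc subgroup.subset)
qed

lemma Pr_Aset:
  assumes "a \<in> Aset G H m" "subgroup H G"
  shows "Pr G H a \<in> lcosets H"
  using assms(1) proof (cases rule: Aset_E)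
  case (1 I j c)
  then show ?thesis using assms Pr_coset
    by (auto simp add: Pr_def LCOSETS_def)
qed

lemma lcosets_act:
  assumes "x \<in> lcosets H" "g \<in> carrier G" "subgroup H G"
  shows "g <# x \<in> lcosets H"
  using assms unfolding LCOSETS_def by (auto simp: lcos_m_assoc subgroup.subset)

lemma lcosets_inv_act:
  assumes "x \<in> lcosets H" "g \<in> carrier G" "subgroup H G"
  shows "inv g <# (g <# x) = x"
  using assms unfolding LCOSETS_def by (auto simp: lcos_m_assoc subgroup.subset m_assoc[symmetric])

lemma lcosets_one_act:
  assumes "x \<in> lcosets H" "subgroup H G"
  shows "\<one> <# x = x"
  using assms unfolding LCOSETS_def by (auto simp: lcos_m_assoc subgroup.subset)


lemma Sset_val:
  assumes "s \<in> Sset G H m" "x \<in> lcosets H"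
  shows "s x \<in> Aset G H m" "Pr G H (s x) = x"
  using assms unfolding Sset_def by auto

lemma lcos_assoc2:
  assumes "x \<in> lcosets H" "subgroup H G" "a \<in> carrier G" "b \<in> carrier G"
  shows "(a \<otimes> b) <# x = a <# (b <# x)"
  using lcos_m_assoc[of x a b] assms subgroup.lcosets_carrier[OF assms(2) is_group assms(1)] by simp

lemma Sact_fix_iff:
  assumes "s \<in> Sset G H m" "g \<in> carrier G" "subgroup H G"
  shows "(Sact G H g s = s) = (\<forall>x\<in>lcosets H. s (g <# x) = Aact G g (s x))"
proof
  assume eq: "Sact G H g s = s"
  show "\<forall>x\<in>lcosets H. s (g <# x) = Aact G g (s x)"
  proof
    fix x assume x: "x \<in> lcosets H"
    have y: "g <# x \<in> lcosets H" using lcosets_act[OF x assms(2,3)] .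
    have "s (g <# x) = Sact G H g s (g <# x)" using eq by simp
    also have "\<dots> = Aact G g (s (inv g <# (g <# x)))" using y by (simp add: Sact_def)
    also have "\<dots> = Aact G g (s x)" using lcosets_inv_act[OF x assms(2,3)] by simp
    finally show "s (g <# x) = Aact G g (s x)" .
  qed
next
  assume eq: "\<forall>x\<in>lcosets H. s (g <# x) = Aact G g (s x)"
  show "Sact G H g s = s"
  proof
    fix x
    show "Sact G H g s x = s x"
    proof (cases "x \<in> lcosets H")
      case True
      have y: "inv g <# x \<in> lcosets H" using lcosets_act[OF True _ assms(3)] assms(2) by simp
      have "g <# (inv g <# x) = x" using lcosets_inv_act[OF True _ assms(3), of "inv g"] assms(2) by simp
      then have "s x = Aact G g (s (inv g <# x))" using eq y by metis
      then show ?thesis using True by (simp add: Sact_def)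
    next
      case False
      then show ?thesis using assms(1) by (simp add: Sact_def Sset_def extensional_def)
    qed
  qed
qed

lemma stab_eq:
  assumes "s \<in> Sset G H m" "subgroup H G"
  shows "stab G H s = {g \<in> carrier G. \<forall>x\<in>lcosets H. s (g <# x) = Aact G g (s x)}"
  using Sact_fix_iff[OF assms(1) _ assms(2)] unfolding stab_def by blast

lemma stab_subgroup:
  assumes "s \<in> Sset G H m" "subgroup H G"
  shows "subgroup (stab G H s) G"
proof (rule subgroupI)
  note se = stab_eq[OF assms]
  show "stab G H s \<subseteq> carrier G" unfolding stab_def by blast
  have "\<one> \<in> stab G H s" unfolding se
    using lcosets_one_act[OF _ assms(2)] Aact_one[OF Sset_val(1)[OF assms(1)]] by simp
  then show "stab G H s \<noteq> {}" by blast
next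
  note se = stab_eq[OF assms]
  fix a assume a: "a \<in> stab G H s"
  then have ac: "a \<in> carrier G" and eq: "\<forall>x\<in>lcosets H. s (a <# x) = Aact G a (s x)"
    unfolding se by auto
  have "s (inv a <# x) = Aact G (inv a) (s x)" if x: "x \<in> lcosets H" for x
  proof -
    have y: "inv a <# x \<in> lcosets H" using lcosets_act[OF x _ assms(2)] ac by simp
    have ay: "a <# (inv a <# x) = x" using lcosets_inv_act[OF x _ assms(2), of "inv a"] ac by simp
    have "s x = Aact G a (s (inv a <# x))" using eq y ay by metis
    then have "Aact G (inv a) (s x) = Aact G (inv a \<otimes> a) (s (inv a <# x))"
      using Aact_Aact[OF Sset_val(1)[OF assms(1) y]] ac by simp
    also have "\<dots> = s (inv a <# x)" using Aact_one[OF Sset_val(1)[OF assms(1) y]] ac by simp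
    finally show ?thesis by simp
  qed
  then show "inv a \<in> stab G H s" unfolding se using ac by simp
next
  note se = stab_eq[OF assms]
  fix a b assume "a \<in> stab G H s" "b \<in> stab G H s"
  then have ac: "a \<in> carrier G" "b \<in> carrier G" and eqa: "\<forall>x\<in>lcosets H. s (a <# x) = Aact G a (s x)"
     and eqb: "\<forall>x\<in>lcosets H. s (b <# x) = Aact G b (s x)"
    unfolding se by auto
  have "s ((a \<otimes> b) <# x) = Aact G (a \<otimes> b) (s x)" if x: "x \<in> lcosets H" for x
  proof -
    have y: "b <# x \<in> lcosets H" using lcosets_act[OF x _ assms(2)] ac by simp
    have "s ((a \<otimes> b) <# x) = s (a <# (b <# x))" using lcos_assoc2[OF x assms(2) ac] by simp
    also have "\<dots> = Aact G a (Aact G b (s x))" using eqa eqb x y by simp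
    also have "\<dots> = Aact G (a \<otimes> b) (s x)" using Aact_Aact[OF Sset_val(1)[OF assms(1) x] ac] .
    finally show ?thesis .
  qed
  then show "a \<otimes> b \<in> stab G H s" unfolding se using ac by simp
qed

end




lemma set_mult_memI:
  assumes "a \<in> A" "b \<in> B" "x = a \<otimes>\<^bsub>G\<^esub> b"
  shows "x \<in> A <#>\<^bsub>G\<^esub> B"
  using assms unfolding set_mult_def by blast

lemma set_mult_memE:
  assumes "x \<in> A <#>\<^bsub>G\<^esub> B"
  obtains a b where "a \<in> A" "b \<in> B" "x = a \<otimes>\<^bsub>G\<^esub> b"
  using assms unfolding set_mult_def by blast

context comm_group
begin

lemma rep_dec:
  assumes H: "subgroup H G" and K: "subgroup K G" and R: "R \<subseteq> carrier G"
    and Rdec: "\<And>g. g \<in> carrier G \<Longrightarrow> \<exists>r\<in>R. inv r \<otimes> g \<in> K <#> H"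
    and x: "x \<in> lcosets H"
  shows "\<exists>k\<in>K. \<exists>r\<in>R. x = (k \<otimes> r) <# H"
proof -
  obtain g where g: "g \<in> carrier G" "x = g <# H" using x unfolding LCOSETS_def by blast
  obtain r where r: "r \<in> R" "inv r \<otimes> g \<in> K <#> H" using Rdec[OF g(1)] by blast
  obtain k h where kh: "k \<in> K" "h \<in> H" "inv r \<otimes> g = k \<otimes> h" using r(2) by (rule set_mult_memE)
  have rc: "r \<in> carrier G" using R r(1) by auto
  have kc: "k \<in> carrier G" using subgroup.mem_carrier[OF K kh(1)] .
  have hc: "h \<in> carrier G" using subgroup.mem_carrier[OF H kh(2)] .
  have "inv (k \<otimes> r) \<otimes> g = inv k \<otimes> (inv r \<otimes> g)"
    using rc kc g by (simp add: inv_mult m_assoc)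
  also have "\<dots> = inv k \<otimes> (k \<otimes> h)" using kh(3) by simp
  also have "\<dots> = h" using kc hc by (simp add: m_assoc[symmetric])
  finally have "inv (k \<otimes> r) \<otimes> g \<in> H" using kh by simp
  then have "(k \<otimes> r) <# H = g <# H" using lcos_eq_iff[OF H, of "k \<otimes> r" g] rc kc g by simp
  then have "x = (k \<otimes> r) <# H" using g by simp
  then show ?thesis using kh(1) r(1) by blast
qed

lemma rep_uni:
  assumes H: "subgroup H G" and K: "subgroup K G" and R: "R \<subseteq> carrier G"
    and Runi: "\<And>r r'. r \<in> R \<Longrightarrow> r' \<in> R \<Longrightarrow> inv r \<otimes> r' \<in> K <#> H \<Longrightarrow> r = r'"
    and k: "k \<in> K" "k' \<in> K" and r: "r \<in> R" "r' \<in> R"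
    and eq: "(k \<otimes> r) <# H = (k' \<otimes> r') <# H"
  shows "r = r' \<and> inv k \<otimes> k' \<in> H"
proof -
  have rc: "r \<in> carrier G" "r' \<in> carrier G" using r R by auto
  have kc: "k \<in> carrier G" "k' \<in> carrier G" using k subgroup.mem_carrier[OF K] by auto
  define h where "h = inv (k \<otimes> r) \<otimes> (k' \<otimes> r')"
  have hH: "h \<in> H" using lcos_eq_iff[OF H, of "k \<otimes> r" "k' \<otimes> r'"] eq rc kc unfolding h_def by simp
  have hc: "h \<in> carrier G" using subgroup.mem_carrier[OF H hH] .
  have he: "h = (inv k \<otimes> k') \<otimes> (inv r \<otimes> r')" unfolding h_def using rc kc by (simp add: inv_mult m_ac)
  have "inv r \<otimes> r' = inv (inv k \<otimes> k') \<otimes> h"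
    using inv_solve_left[of "inv r \<otimes> r'" "inv k \<otimes> k'" h] he rc kc hc by simp
  moreover have "inv (inv k \<otimes> k') \<in> K"
    using k K by (simp add: subgroup.m_closed subgroup.m_inv_closed)
  ultimately have "inv r \<otimes> r' \<in> K <#> H" using hH by (metis set_mult_memI)
  then have rr: "r = r'" by (rule Runi[OF r])
  have "h = inv k \<otimes> k'" using he rr rc kc by simp
  then show ?thesis using rr hH by simp
qed

end




context comm_group
begin

lemma rearr:
  assumes "a \<in> carrier G" "b \<in> carrier G" "c \<in> carrier G"
  shows "(a \<otimes> b) \<otimes> (inv a \<otimes> c) = c \<otimes> b"
proof -
  have "(a \<otimes> b) \<otimes> (inv a \<otimes> c) = a \<otimes> (b \<otimes> (inv a \<otimes> c))" using assms by (simp add: m_assoc)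
  also have "b \<otimes> (inv a \<otimes> c) = inv a \<otimes> (b \<otimes> c)" using assms by (simp add: m_lcomm)
  also have "a \<otimes> (inv a \<otimes> (b \<otimes> c)) = b \<otimes> c" using assms by (simp add: m_assoc[symmetric])
  also have "b \<otimes> c = c \<otimes> b" using assms by (simp add: m_comm)
  finally show ?thesis .
qed

lemma lcos_H_carrier:
  assumes H: "subgroup H G" and r: "r \<in> carrier G"
  shows "r <# H \<in> lcosets H"
  using r unfolding LCOSETS_def by blast

lemma inv_lcos_cancel:
  assumes H: "subgroup H G" and r: "r \<in> carrier G"
  shows "inv r <# (r <# H) = H"
proof -
  have Hc: "H \<subseteq> carrier G" using subgroup.subset[OF H] .
  have "inv r <# (r <# H) = (inv r \<otimes> r) <# H" using lcos_m_assoc[OF Hc] r by simp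
  also have "\<dots> = H" using lcos_mult_one[OF Hc] r by simp
  finally show ?thesis .
qed

lemma equiv_count:
  fixes m :: "'a set \<Rightarrow> nat"
  assumes H: "subgroup H G" and K: "subgroup K G" and R: "R \<subseteq> carrier G" and finR: "finite R"
    and Rdec: "\<And>g. g \<in> carrier G \<Longrightarrow> \<exists>r\<in>R. inv r \<otimes> g \<in> K <#> H"
    and Runi: "\<And>r r'. r \<in> R \<Longrightarrow> r' \<in> R \<Longrightarrow> inv r \<otimes> r' \<in> K <#> H \<Longrightarrow> r = r'"
  shows "card {s \<in> Sset G H m. K \<subseteq> stab G H s}
       = card {a \<in> Aset G H m. Pr G H a = H \<and> (\<forall>k\<in>K \<inter> H. Aact G k a = a)} ^ card R"
proof -
  define F0 where "F0 = {a \<in> Aset G H m. Pr G H a = H \<and> (\<forall>k\<in>K \<inter> H. Aact G k a = a)}"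
  have Kc: "\<And>k. k \<in> K \<Longrightarrow> k \<in> carrier G" using subgroup.mem_carrier[OF K] .
  have Rc: "\<And>r. r \<in> R \<Longrightarrow> r \<in> carrier G" using R by auto
  have D: "\<And>x. x \<in> lcosets H \<Longrightarrow> \<exists>k\<in>K. \<exists>r\<in>R. x = (k \<otimes> r) <# H"
    using rep_dec[OF H K R Rdec] by blast
  have U: "\<And>k k' r r'. k \<in> K \<Longrightarrow> k' \<in> K \<Longrightarrow> r \<in> R \<Longrightarrow> r' \<in> R \<Longrightarrow>
      (k \<otimes> r) <# H = (k' \<otimes> r') <# H \<Longrightarrow> r = r' \<and> inv k \<otimes> k' \<in> H"
    using rep_uni[OF H K R Runi] by blast
  define E where "E = {s \<in> Sset G H m. \<forall>k\<in>K. \<forall>x\<in>lcosets H. s (k <# x) = Aact G k (s x)}"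
  have EE: "{s \<in> Sset G H m. K \<subseteq> stab G H s} = E"
  proof -
    have "K \<subseteq> stab G H s \<longleftrightarrow> (\<forall>k\<in>K. \<forall>x\<in>lcosets H. s (k <# x) = Aact G k (s x))"
      if "s \<in> Sset G H m" for s
      using stab_eq[OF that H] Kc by blast
    then show ?thesis unfolding E_def by blast
  qed
  define Phi where "Phi s = (\<lambda>r\<in>R. Aact G (inv r) (s (r <# H)))" for s :: "'a set \<Rightarrow> 'a set \<times> nat \<times> 'a set"
  define pk where "pk x = (SOME p. fst p \<in> K \<and> snd p \<in> R \<and> x = (fst p \<otimes> snd p) <# H)" for x
  define Psi where "Psi f = (\<lambda>x\<in>lcosets H. Aact G (fst (pk x) \<otimes> snd (pk x)) (f (snd (pk x))))"
    for f :: "'a \<Rightarrow> 'a set \<times> nat \<times> 'a set"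
  have pk: "fst (pk x) \<in> K \<and> snd (pk x) \<in> R \<and> x = (fst (pk x) \<otimes> snd (pk x)) <# H"
    if x: "x \<in> lcosets H" for x
  proof -
    obtain k r where "k \<in> K" "r \<in> R" "x = (k \<otimes> r) <# H" using D[OF x] by blast
    then have "\<exists>p. fst p \<in> K \<and> snd p \<in> R \<and> x = (fst p \<otimes> snd p) <# H" by (intro exI[of _ "(k, r)"]) simp
    then show ?thesis unfolding pk_def by (rule someI_ex)
  qed
  have krH: "(k \<otimes> r) <# H \<in> lcosets H" if "k \<in> K" "r \<in> R" for k r
    using lcos_H_carrier[OF H] Kc Rc that by simp
  have F0fix: "Aact G k a = a" if "a \<in> F0" "k \<in> K" "k \<in> H" for a k
    using that unfolding F0_def by blast
  have F0A: "a \<in> Aset G H m" if "a \<in> F0" for a using that unfolding F0_def by blast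
  have Psi_val: "Psi f ((k \<otimes> r) <# H) = Aact G (k \<otimes> r) (f r)"
    if f: "f \<in> PiE R (\<lambda>_. F0)" and k: "k \<in> K" and r: "r \<in> R" for f k r
  proof -
    define x where "x = (k \<otimes> r) <# H"
    have x: "x \<in> lcosets H" unfolding x_def using krH[OF k r] .
    define k' where "k' = fst (pk x)"
    define r' where "r' = snd (pk x)"
    have k': "k' \<in> K" and r': "r' \<in> R" and xe: "x = (k' \<otimes> r') <# H"
      using pk[OF x] unfolding k'_def r'_def by auto
    have "(k' \<otimes> r') <# H = (k \<otimes> r) <# H" using xe unfolding x_def by simp
    from U[OF k' k r' r this] have rr: "r' = r" and uH: "inv k' \<otimes> k \<in> H" by auto
    have uK: "inv k' \<otimes> k \<in> K" using k k' K by (simp add: subgroup.m_closed subgroup.m_inv_closed)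
    have fr: "f r \<in> F0" using f r by auto
    have kc: "k \<in> carrier G" "k' \<in> carrier G" using Kc k k' by auto
    have rc: "r \<in> carrier G" using Rc r by auto
    have "Psi f x = Aact G (k' \<otimes> r) (f r)" using x rr unfolding Psi_def k'_def r'_def by simp
    also have "\<dots> = Aact G (k' \<otimes> r) (Aact G (inv k' \<otimes> k) (f r))" using F0fix[OF fr uK uH] by simp
    also have "\<dots> = Aact G ((k' \<otimes> r) \<otimes> (inv k' \<otimes> k)) (f r)"
      using Aact_Aact[OF F0A[OF fr]] kc rc by simp
    also have "(k' \<otimes> r) \<otimes> (inv k' \<otimes> k) = k \<otimes> r"
      using rearr kc rc by blast
    finally show ?thesis unfolding x_def .
  qed
  have img1: "Phi s \<in> PiE R (\<lambda>_. F0)" if s: "s \<in> E" for s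
  proof (rule PiE_I)
    fix r assume r: "r \<notin> R" then show "Phi s r = undefined" unfolding Phi_def by simp
  next
    fix r assume r: "r \<in> R"
    have rc: "r \<in> carrier G" using Rc r by auto
    have sS: "s \<in> Sset G H m" using s unfolding E_def by blast
    have seq: "\<And>k x. k \<in> K \<Longrightarrow> x \<in> lcosets H \<Longrightarrow> s (k <# x) = Aact G k (s x)"
      using s unfolding E_def by blast
    have rH: "r <# H \<in> lcosets H" using lcos_H_carrier[OF H rc] .
    define a where "a = s (r <# H)"
    have aA: "a \<in> Aset G H m" and aP: "Pr G H a = r <# H" unfolding a_def using Sset_val[OF sS rH] by auto
    have bA: "Aact G (inv r) a \<in> Aset G H m" using Aact_Aset[OF aA] rc by simp
    have bP: "Pr G H (Aact G (inv r) a) = H"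
      using Pr_Aact[OF aA _ H, of "inv r"] rc aP inv_lcos_cancel[OF H rc] by simp
    have bF: "Aact G k (Aact G (inv r) a) = Aact G (inv r) a" if k: "k \<in> K \<inter> H" for k
    proof -
      have kc: "k \<in> carrier G" using Kc k by auto
      have "inv r \<otimes> (k \<otimes> r) = k \<otimes> (inv r \<otimes> r)" using kc rc by (simp add: m_lcomm)
      then have "inv r \<otimes> (k \<otimes> r) = k" using kc rc by simp
      then have "(k \<otimes> r) <# H = r <# H" using lcos_eq_iff[OF H, of r "k \<otimes> r"] k kc rc by simp
      then have kr: "k <# (r <# H) = r <# H" using lcos_m_assoc[OF subgroup.subset[OF H]] kc rc by simp
      have "Aact G k (Aact G (inv r) a) = Aact G (k \<otimes> inv r) a" using Aact_Aact[OF aA] kc rc by simp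
      also have "k \<otimes> inv r = inv r \<otimes> k" using kc rc by (simp add: m_comm)
      also have "Aact G (inv r \<otimes> k) a = Aact G (inv r) (Aact G k a)" using Aact_Aact[OF aA] kc rc by simp
      also have "Aact G k a = s (k <# (r <# H))" unfolding a_def using seq[OF _ rH] k by simp
      also have "\<dots> = a" unfolding a_def kr ..
      finally show ?thesis .
    qed
    show "Phi s r \<in> F0" unfolding Phi_def F0_def using r bA bP bF a_def by simp
  qed
  have img2: "Psi f \<in> E" if f: "f \<in> PiE R (\<lambda>_. F0)" for f
  proof -
    have val: "Psi f x \<in> Aset G H m \<and> Pr G H (Psi f x) = x" if x: "x \<in> lcosets H" for x
    proof -
      obtain k r where k: "k \<in> K" and r: "r \<in> R" and xe: "x = (k \<otimes> r) <# H" using D[OF x] by blast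
      have fr: "f r \<in> F0" using f r by auto
      have kc: "k \<otimes> r \<in> carrier G" using Kc[OF k] Rc[OF r] by simp
      have "Psi f x = Aact G (k \<otimes> r) (f r)" using Psi_val[OF f k r] xe by simp
      moreover have "Aact G (k \<otimes> r) (f r) \<in> Aset G H m" using Aact_Aset[OF F0A[OF fr] kc] .
      moreover have "Pr G H (Aact G (k \<otimes> r) (f r)) = x"
        using Pr_Aact[OF F0A[OF fr] kc H] fr xe unfolding F0_def by simp
      ultimately show ?thesis by simp
    qed
    have eqv: "Psi f (k0 <# x) = Aact G k0 (Psi f x)" if k0: "k0 \<in> K" and x: "x \<in> lcosets H" for k0 x
    proof -
      obtain k r where k: "k \<in> K" and r: "r \<in> R" and xe: "x = (k \<otimes> r) <# H" using D[OF x] by blast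
      have fr: "f r \<in> F0" using f r by auto
      have c: "k0 \<in> carrier G" "k \<in> carrier G" "r \<in> carrier G" using Kc k0 k Rc r by auto
      have "k0 <# x = (k0 \<otimes> (k \<otimes> r)) <# H" using xe lcos_m_assoc[OF subgroup.subset[OF H]] c by simp
      also have "\<dots> = ((k0 \<otimes> k) \<otimes> r) <# H" using c by (simp add: m_assoc)
      finally have e1: "k0 <# x = ((k0 \<otimes> k) \<otimes> r) <# H" .
      have kk: "k0 \<otimes> k \<in> K" using k0 k K by (simp add: subgroup.m_closed)
      have "Psi f (k0 <# x) = Aact G ((k0 \<otimes> k) \<otimes> r) (f r)" using Psi_val[OF f kk r] e1 by simp
      also have "\<dots> = Aact G (k0 \<otimes> (k \<otimes> r)) (f r)" using c by (simp add: m_assoc)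
      also have "\<dots> = Aact G k0 (Aact G (k \<otimes> r) (f r))" using Aact_Aact[OF F0A[OF fr]] c by simp
      also have "\<dots> = Aact G k0 (Psi f x)" using Psi_val[OF f k r] xe by simp
      finally show ?thesis .
    qed
    have "Psi f \<in> extensional (lcosets H)" unfolding Psi_def by simp
    then have "Psi f \<in> Sset G H m" unfolding Sset_def using val by blast
    then show ?thesis unfolding E_def using eqv by blast
  qed
  have left: "Psi (Phi s) = s" if s: "s \<in> E" for s
  proof
    fix x
    have sS: "s \<in> Sset G H m" using s unfolding E_def by blast
    have seq: "\<And>k x. k \<in> K \<Longrightarrow> x \<in> lcosets H \<Longrightarrow> s (k <# x) = Aact G k (s x)"
      using s unfolding E_def by blast
    show "Psi (Phi s) x = s x"
    proof (cases "x \<in> lcosets H")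
      case True
      obtain k r where k: "k \<in> K" and r: "r \<in> R" and xe: "x = (k \<otimes> r) <# H" using D[OF True] by blast
      have c: "k \<in> carrier G" "r \<in> carrier G" using Kc k Rc r by auto
      have rH: "r <# H \<in> lcosets H" using lcos_H_carrier[OF H] c by simp
      have aA: "s (r <# H) \<in> Aset G H m" using Sset_val[OF sS rH] by simp
      have "Psi (Phi s) x = Aact G (k \<otimes> r) (Phi s r)" using Psi_val[OF img1[OF s] k r] xe by simp
      also have "\<dots> = Aact G (k \<otimes> r) (Aact G (inv r) (s (r <# H)))" unfolding Phi_def using r by simp
      also have "\<dots> = Aact G ((k \<otimes> r) \<otimes> inv r) (s (r <# H))" using Aact_Aact[OF aA] c by simp
      also have "(k \<otimes> r) \<otimes> inv r = k" using c by (simp add: m_assoc)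
      also have "Aact G k (s (r <# H)) = s (k <# (r <# H))" using seq[OF k rH] by simp
      also have "k <# (r <# H) = x" using xe lcos_m_assoc[OF subgroup.subset[OF H]] c by simp
      finally show ?thesis .
    next
      case False
      then show ?thesis using sS unfolding Psi_def Sset_def extensional_def by simp
    qed
  qed
  have right: "Phi (Psi f) = f" if f: "f \<in> PiE R (\<lambda>_. F0)" for f
  proof
    fix r
    show "Phi (Psi f) r = f r"
    proof (cases "r \<in> R")
      case True
      have c: "r \<in> carrier G" using Rc True by auto
      have fr: "f r \<in> F0" using f True by auto
      have "Psi f (r <# H) = Aact G r (f r)" using Psi_val[OF f subgroup.one_closed[OF K] True] c by simp
      then have "Phi (Psi f) r = Aact G (inv r) (Aact G r (f r))" unfolding Phi_def using True by simp
      also have "\<dots> = Aact G (inv r \<otimes> r) (f r)" using Aact_Aact[OF F0A[OF fr]] c by simp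
      also have "inv r \<otimes> r = \<one>" using c by simp
      also have "Aact G \<one> (f r) = f r" using Aact_one[OF F0A[OF fr]] .
      finally show ?thesis .
    next
      case False
      then show ?thesis using PiE_arb[OF f False] unfolding Phi_def by simp
    qed
  qed
  have "bij_betw Phi E (PiE R (\<lambda>_. F0))"
  proof (rule bij_betw_byWitness[where f'=Psi])
    show "\<forall>a\<in>E. Psi (Phi a) = a" using left by blast
    show "\<forall>a'\<in>PiE R (\<lambda>_. F0). Phi (Psi a') = a'" using right by blast
    show "Phi ` E \<subseteq> PiE R (\<lambda>_. F0)" using img1 by blast
    show "Psi ` PiE R (\<lambda>_. F0) \<subseteq> E" using img2 by blast
  qed
  then have "card E = card (PiE R (\<lambda>_. F0))" by (rule bij_betw_same_card)
  also have "\<dots> = card F0 ^ card R" using card_PiE[OF finR, of "\<lambda>_. F0"] by simp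
  finally have "card E = card F0 ^ card R" .
  then show ?thesis using EE unfolding F0_def by simp
qed

end




context comm_group
begin

lemma reps_exist:
  assumes fin: "finite (carrier G)" and H: "subgroup H G" and K: "subgroup K G"
  obtains R where "R \<subseteq> carrier G" "finite R"
    "\<And>g. g \<in> carrier G \<Longrightarrow> \<exists>r\<in>R. inv r \<otimes> g \<in> K <#> H"
    "\<And>r r'. r \<in> R \<Longrightarrow> r' \<in> R \<Longrightarrow> inv r \<otimes> r' \<in> K <#> H \<Longrightarrow> r = r'"
    "card R = card (carrier G) div card (K <#> H)"
proof -
  define KH where "KH = K <#> H"
  have KHs: "subgroup KH G" unfolding KH_def using mult_subgroups[OF K H] .
  define rep where "rep C = (SOME g. g \<in> C)" for C :: "'a set"
  have crep: "rep C \<in> C \<and> C = rep C <# KH \<and> rep C \<in> carrier G" if C: "C \<in> lcosets KH" for C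
  proof -
    obtain a where a: "a \<in> carrier G" "C = a <# KH" using C unfolding LCOSETS_def by blast
    have "a \<in> C" using lcos_self[OF a(1) KHs] a(2) by simp
    then have rC: "rep C \<in> C" unfolding rep_def by (rule someI)
    then have "a <# KH = rep C <# KH" using l_repr_independence[OF _ a(1) KHs] a(2) by simp
    moreover have "rep C \<in> carrier G" using rC a l_coset_carrier[OF _ a(1) KHs] by simp
    ultimately show ?thesis using rC a(2) by simp
  qed
  define R where "R = rep ` (lcosets KH)"
  have Rc: "R \<subseteq> carrier G" unfolding R_def using crep by blast
  have finL: "finite (lcosets KH)" using lcosets_subset_PowG[OF KHs] fin
    by (meson Pow_iff finite_Pow_iff finite_subset)
  have inj: "inj_on rep (lcosets KH)"
  proof (rule inj_onI)
    fix C C' assume "C \<in> lcosets KH" "C' \<in> lcosets KH" "rep C = rep C'"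
    then show "C = C'" using crep by metis
  qed
  have cardR: "card R = card (lcosets KH)" unfolding R_def using card_image[OF inj] .
  have lag: "card (lcosets KH) * card KH = card (carrier G)"
    using l_lagrange[OF fin KHs] unfolding order_def .
  have "card KH > 0" using fin KHs subgroup.subset[OF KHs] subgroup.one_closed[OF KHs]
    by (metis card_gt_0_iff empty_iff finite_subset)
  then have cR: "card R = card (carrier G) div card (K <#> H)" using cardR lag unfolding KH_def
    by (metis nonzero_mult_div_cancel_right less_irrefl)
  have dec: "\<exists>r\<in>R. inv r \<otimes> g \<in> K <#> H" if g: "g \<in> carrier G" for g
  proof -
    define C where "C = g <# KH"
    have C: "C \<in> lcosets KH" unfolding C_def LCOSETS_def using g by blast
    have "rep C <# KH = g <# KH" using crep[OF C] unfolding C_def by simp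
    then have "inv (rep C) \<otimes> g \<in> KH" using lcos_eq_iff[OF KHs, of "rep C" g] crep[OF C] g by simp
    moreover have "rep C \<in> R" unfolding R_def using C by blast
    ultimately show ?thesis unfolding KH_def by blast
  qed
  have uni: "r = r'" if r: "r \<in> R" "r' \<in> R" and m: "inv r \<otimes> r' \<in> K <#> H" for r r'
  proof -
    obtain C where C: "C \<in> lcosets KH" "r = rep C" using r(1) unfolding R_def by blast
    obtain C' where C': "C' \<in> lcosets KH" "r' = rep C'" using r(2) unfolding R_def by blast
    have "r <# KH = r' <# KH" using lcos_eq_iff[OF KHs, of r r'] m crep[OF C(1)] crep[OF C'(1)] C C'
      unfolding KH_def by simp
    then have "C = C'" using crep[OF C(1)] crep[OF C'(1)] C C' by metis
    then show ?thesis using C C' by simp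
  qed
  have "finite R" unfolding R_def using finL by simp
  then show ?thesis using that Rc dec uni cR by blast
qed

lemma card_F0:
  fixes m :: "'a set \<Rightarrow> nat"
  assumes fin: "finite (carrier G)" and H: "subgroup H G" and K: "subgroup K G"
  shows "card {a \<in> Aset G H m. Pr G H a = H \<and> (\<forall>k\<in>K \<inter> H. Aact G k a = a)}
       = (\<Sum>I \<in> {I. subgroup I G \<and> K \<inter> H \<subseteq> I \<and> I \<subseteq> H}. m I * idx H I)"
proof -
  define Subs where "Subs = {I. subgroup I G \<and> K \<inter> H \<subseteq> I \<and> I \<subseteq> H}"
  define LC where "LC I = (\<lambda>g. g <# I) ` H" for I
  have Hc: "H \<subseteq> carrier G" using subgroup.subset[OF H] .
  have HH: "g <# H = H" if "g \<in> H" for g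
  proof -
    have gc: "g \<in> carrier G" using that Hc by auto
    have "g <# H = \<one> <# H" using lcos_eq_iff[OF H gc] that gc subgroup.m_inv_closed[OF H that] by simp
    then show ?thesis using lcos_mult_one[OF Hc] by simp
  qed
  have eq: "{a \<in> Aset G H m. Pr G H a = H \<and> (\<forall>k\<in>K \<inter> H. Aact G k a = a)}
      = (SIGMA I:Subs. {..<m I} \<times> LC I)" (is "?L = ?R")
  proof
    show "?L \<subseteq> ?R"
    proof
      fix a assume a: "a \<in> ?L"
      then have aA: "a \<in> Aset G H m" by blast
      then obtain I j g where a1: "a = (I, j, g <# I)" "subgroup I G" "I \<subseteq> H" "j < m I" "g \<in> carrier G"
        by (rule Aset_E)
      have "Pr G H a = g <# H" using a1 Pr_coset[OF a1(2) H a1(3) a1(5)] by (simp add: Pr_def)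
      then have "g <# H = H" using a by simp
      then have gH: "g \<in> H" using lcos_self[OF a1(5) H] by simp
      have "k \<in> I" if k: "k \<in> K \<inter> H" for k
      proof -
        have kc: "k \<in> carrier G" using k Hc by auto
        have "Aact G k a = a" using a k by blast
        then have "k <# (g <# I) = g <# I" using a1(1) by (simp add: Aact_def)
        then show ?thesis using lcos_fix_iff[OF a1(2,5) kc] by simp
      qed
      then have "I \<in> Subs" unfolding Subs_def using a1 by blast
      moreover have "g <# I \<in> LC I" unfolding LC_def using gH by blast
      ultimately show "a \<in> ?R" using a1 by blast
    qed
  next
    show "?R \<subseteq> ?L"
    proof
      fix a assume a: "a \<in> ?R"
      then obtain I j c where a1: "a = (I, j, c)" "I \<in> Subs" "j < m I" "c \<in> LC I" by blast
      obtain g where g: "g \<in> H" "c = g <# I" using a1(4) unfolding LC_def by blast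
      have I: "subgroup I G" "I \<subseteq> H" "K \<inter> H \<subseteq> I" using a1(2) unfolding Subs_def by auto
      have gc: "g \<in> carrier G" using g Hc by auto
      have aA: "a \<in> Aset G H m" using Aset_I[where m=m and H=H, OF I(1,2) a1(3) gc] a1(1) g(2) by simp
      have aP: "Pr G H a = H" using a1(1) g(2) Pr_coset[OF I(1) H I(2) gc] HH[OF g(1)] by (simp add: Pr_def)
      have "Aact G k a = a" if k: "k \<in> K \<inter> H" for k
      proof -
        have kc: "k \<in> carrier G" using k Hc by auto
        have "k \<in> I" using k I(3) by blast
        then have "k <# (g <# I) = g <# I" using lcos_fix_iff[OF I(1) gc kc] by simp
        then show ?thesis using a1(1) g(2) by (simp add: Aact_def)
      qed
      then show "a \<in> ?L" using aA aP by blast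
    qed
  qed
  have finH: "finite H" using fin Hc finite_subset by blast
  have finSubs: "finite Subs"
  proof (rule finite_subset)
    show "Subs \<subseteq> Pow H" unfolding Subs_def by blast
    show "finite (Pow H)" using finH by simp
  qed
  have finLC: "finite (LC I)" for I unfolding LC_def using finH by simp
  have cardLC: "card (LC I) = idx H I" if I: "I \<in> Subs" for I
  proof -
    have Is: "subgroup I G" "I \<subseteq> H" using I unfolding Subs_def by auto
    interpret GH: group "G\<lparr>carrier := H\<rparr>" using subgroup_imp_group[OF H] .
    have IsH: "subgroup I (G\<lparr>carrier := H\<rparr>)" using subgroup_incl[OF Is(1) H Is(2)] .
    have "lcosets\<^bsub>G\<lparr>carrier := H\<rparr>\<^esub> I = LC I" unfolding LCOSETS_def LC_def by auto
    moreover have "card (lcosets\<^bsub>G\<lparr>carrier := H\<rparr>\<^esub> I) * card I = card H"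
      using GH.l_lagrange[OF _ IsH] finH unfolding order_def by simp
    moreover have "card I > 0" using Is finH subgroup.one_closed[OF Is(1)]
      by (metis card_gt_0_iff empty_iff finite_subset)
    ultimately show ?thesis unfolding idx_def by (metis nonzero_mult_div_cancel_right less_irrefl)
  qed
  have "card ?R = (\<Sum>I\<in>Subs. card ({..<m I} \<times> LC I))"
    by (rule card_SigmaI[OF finSubs]) (simp add: finLC)
  also have "\<dots> = (\<Sum>I\<in>Subs. m I * idx H I)"
    using cardLC by (simp add: card_cartesian_product)
  finally show ?thesis using eq unfolding Subs_def by simp
qed

end




lemma (in comm_group) cor7_aux:
  fixes H :: "'a set" and m :: "'a set \<Rightarrow> nat"
  assumes "finite (carrier G)" and "subgroup H G"
  shows "(\<forall>K. subgroup K G \<longrightarrow>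
            card {s \<in> Sset G H m. K \<subseteq> stab G H s}
            = (\<Sum>I \<in> {I. subgroup I G \<and> K \<inter> H \<subseteq> I \<and> I \<subseteq> H}. m I * idx H I)
                ^ idx (carrier G) (K <#> H))
       \<and> (\<forall>K. subgroup K G \<longrightarrow>
            cnt G H m K
            = (\<Sum>I \<in> {I. subgroup I G \<and> K \<inter> H \<subseteq> I \<and> I \<subseteq> H}. m I * idx H I)
                ^ idx (carrier G) (K <#> H)
              - (\<Sum>L \<in> {L. subgroup L G \<and> K \<subset> L}. cnt G H m L))"
proof -
  have fin: "finite (carrier G)" and H: "subgroup H G" using assms by auto
  have part1: "card {s \<in> Sset G H m. K \<subseteq> stab G H s}
            = (\<Sum>I \<in> {I. subgroup I G \<and> K \<inter> H \<subseteq> I \<and> I \<subseteq> H}. m I * idx H I)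
                ^ idx (carrier G) (K <#> H)" if K: "subgroup K G" for K
  proof -
    obtain R where R: "R \<subseteq> carrier G" "finite R"
      "\<And>g. g \<in> carrier G \<Longrightarrow> \<exists>r\<in>R. inv r \<otimes> g \<in> K <#> H"
      "\<And>r r'. r \<in> R \<Longrightarrow> r' \<in> R \<Longrightarrow> inv r \<otimes> r' \<in> K <#> H \<Longrightarrow> r = r'"
      "card R = card (carrier G) div card (K <#> H)"
      using reps_exist[OF fin H K] by blast
    have "card {s \<in> Sset G H m. K \<subseteq> stab G H s}
       = card {a \<in> Aset G H m. Pr G H a = H \<and> (\<forall>k\<in>K \<inter> H. Aact G k a = a)} ^ card R"
      using equiv_count[OF H K R(1,2,3,4)] .
    then show ?thesis using card_F0[OF fin H K, of m] R(5) unfolding idx_def by simp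
  qed
  have finA: "finite (Aset G H m)"
  proof (rule finite_subset)
    show "Aset G H m \<subseteq> (SIGMA I:Pow (carrier G). {..<m I} \<times> Pow (carrier G))"
    proof
      fix a assume "a \<in> Aset G H m"
      then obtain I j g where a: "a = (I, j, g <# I)" "subgroup I G" "I \<subseteq> H" "j < m I" "g \<in> carrier G"
        by (rule Aset_E)
      have "g <# I \<subseteq> carrier G" using l_coset_subset_G[OF subgroup.subset[OF a(2)] a(5)] .
      then show "a \<in> (SIGMA I:Pow (carrier G). {..<m I} \<times> Pow (carrier G))"
        using a subgroup.subset[OF a(2)] by auto
    qed
    show "finite (SIGMA I:Pow (carrier G). {..<m I} \<times> Pow (carrier G))" using fin by auto
  qed
  have finL: "finite (lcosets H)" using lcosets_subset_PowG[OF H] fin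
    by (meson Pow_iff finite_Pow_iff finite_subset)
  have finS: "finite (Sset G H m)"
  proof (rule finite_subset)
    show "Sset G H m \<subseteq> PiE (lcosets H) (\<lambda>_. Aset G H m)"
    proof
      fix s assume s: "s \<in> Sset G H m"
      show "s \<in> PiE (lcosets H) (\<lambda>_. Aset G H m)"
      proof (rule PiE_I)
        fix x assume "x \<in> lcosets H" then show "s x \<in> Aset G H m" using Sset_val(1)[OF s] by simp
      next
        fix x assume "x \<notin> lcosets H" then show "s x = undefined" using s unfolding Sset_def extensional_def by simp
      qed
    qed
    show "finite (PiE (lcosets H) (\<lambda>_. Aset G H m))" by (rule finite_PiE[OF finL]) (simp add: finA)
  qed
  have part2: "cnt G H m K
            = (\<Sum>I \<in> {I. subgroup I G \<and> K \<inter> H \<subseteq> I \<and> I \<subseteq> H}. m I * idx H I)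
                ^ idx (carrier G) (K <#> H)
              - (\<Sum>L \<in> {L. subgroup L G \<and> K \<subset> L}. cnt G H m L)" if K: "subgroup K G" for K
  proof -
    define T where "T = {L. subgroup L G \<and> K \<subseteq> L}"
    define T' where "T' = {L. subgroup L G \<and> K \<subset> L}"
    have finT: "finite T"
    proof (rule finite_subset)
      show "T \<subseteq> Pow (carrier G)" unfolding T_def by (auto dest: subgroup.subset)
      show "finite (Pow (carrier G))" using fin by simp
    qed
    have un: "{s \<in> Sset G H m. K \<subseteq> stab G H s} = (\<Union>L\<in>T. {s \<in> Sset G H m. stab G H s = L})"
    proof
      show "{s \<in> Sset G H m. K \<subseteq> stab G H s} \<subseteq> (\<Union>L\<in>T. {s \<in> Sset G H m. stab G H s = L})"
      proof
        fix s assume s: "s \<in> {s \<in> Sset G H m. K \<subseteq> stab G H s}"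
        then have sS: "s \<in> Sset G H m" and sK: "K \<subseteq> stab G H s" by auto
        have "subgroup (stab G H s) G" using stab_subgroup[OF sS H] .
        then have "stab G H s \<in> T" unfolding T_def using sK by simp
        then show "s \<in> (\<Union>L\<in>T. {s \<in> Sset G H m. stab G H s = L})" using s by blast
      qed
      show "(\<Union>L\<in>T. {s \<in> Sset G H m. stab G H s = L}) \<subseteq> {s \<in> Sset G H m. K \<subseteq> stab G H s}"
        unfolding T_def by blast
    qed
    have "card {s \<in> Sset G H m. K \<subseteq> stab G H s} = (\<Sum>L\<in>T. card {s \<in> Sset G H m. stab G H s = L})"
      unfolding un
    proof (rule card_UN_disjoint[OF finT])
      show "\<forall>L\<in>T. finite {s \<in> Sset G H m. stab G H s = L}" using finS by simp
      show "\<forall>L\<in>T. \<forall>L'\<in>T. L \<noteq> L' \<longrightarrow> {s \<in> Sset G H m. stab G H s = L} \<inter> {s \<in> Sset G H m. stab G H s = L'} = {}"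
        by blast
    qed
    also have "\<dots> = (\<Sum>L\<in>T. cnt G H m L)" unfolding cnt_def ..
    also have "T = insert K T'" unfolding T_def T'_def using K by blast
    also have "(\<Sum>L\<in>insert K T'. cnt G H m L) = cnt G H m K + (\<Sum>L\<in>T'. cnt G H m L)"
    proof (rule sum.insert)
      show "finite T'" using finT unfolding T_def T'_def by (rule finite_subset[rotated]) blast
      show "K \<notin> T'" unfolding T'_def by blast
    qed
    finally show ?thesis using part1[OF K] unfolding T'_def by simp
  qed
  show ?thesis using part1 part2 by blast
qed


theorem corollary7:
  fixes G :: "('a, 'b) monoid_scheme" and H :: "'a set" and m :: "'a set \<Rightarrow> nat"
  assumes "comm_group G" and "finite (carrier G)" and "subgroup H G"
  shows "(\<forall>K. subgroup K G \<longrightarrow>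
            card {s \<in> Sset G H m. K \<subseteq> stab G H s}
            = (\<Sum>I \<in> {I. subgroup I G \<and> K \<inter> H \<subseteq> I \<and> I \<subseteq> H}. m I * idx H I)
                ^ idx (carrier G) (K <#>\<^bsub>G\<^esub> H))
       \<and> (\<forall>K. subgroup K G \<longrightarrow>
            cnt G H m K
            = (\<Sum>I \<in> {I. subgroup I G \<and> K \<inter> H \<subseteq> I \<and> I \<subseteq> H}. m I * idx H I)
                ^ idx (carrier G) (K <#>\<^bsub>G\<^esub> H)
              - (\<Sum>L \<in> {L. subgroup L G \<and> K \<subset> L}. cnt G H m L))"
  using comm_group.cor7_aux[OF assms(1) assms(2) assms(3)] .


end
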